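(* Let $d>0$ and let $p\in\mathbb R[x_1,\dots,x_n]$ have degree $d$ and satisfy $p(x)=1$ whenever $\sum_{j=1}^n x_j=1$. Then $p$ has at least $n$ distinct monomials of degree $d$ (with nonzero coefficients). *)

theory Defs
  imports Complex_Main "HOL-Library.Poly_Mapping"
begin

(* Multivariate real polynomials: finitely supported maps from monomials
   (exponent vectors nat =>0 nat) to real coefficients; keys = monomials with nonzero coefficient. *)

type_synonym mpoly_r = "(nat \<Rightarrow>\<^sub>0 nat) \<Rightarrow>\<^sub>0 real"

definition mon_deg :: "(nat \<Rightarrow>\<^sub>0 nat) \<Rightarrow> nat" where
  "mon_deg m = (\<Sum>i\<in>Poly_Mapping.keys m. Poly_Mapping.lookup m i)"

definition vars_in :: "mpoly_r \<Rightarrow> nat \<Rightarrow> bool" where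
  "vars_in p n \<longleftrightarrow> (\<forall>m\<in>Poly_Mapping.keys p. Poly_Mapping.keys m \<subseteq> {..<n})"

definition total_deg :: "mpoly_r \<Rightarrow> nat" where
  "total_deg p = (if p = 0 then 0 else Max (mon_deg ` Poly_Mapping.keys p))"

definition eval_mp :: "mpoly_r \<Rightarrow> (nat \<Rightarrow> real) \<Rightarrow> real" where
  "eval_mp p x = (\<Sum>m\<in>Poly_Mapping.keys p. Poly_Mapping.lookup p m * (\<Prod>i\<in>Poly_Mapping.keys m. x i ^ Poly_Mapping.lookup m i))"

end

theory Submission
  imports Defs
begin

lemma cont0:
  fixes h :: "real \<Rightarrow> real"
  assumes "isCont h 0" "\<And>t. t \<noteq> 0 \<Longrightarrow> h t = 0"
  shows "h 0 = 0"
proof -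
  have "(h \<longlongrightarrow> 0) (at 0)"
    by (rule tendsto_eventually) (auto simp: eventually_at_filter assms(2))
  moreover have "(h \<longlongrightarrow> h 0) (at 0)" using assms(1) by (simp add: isCont_def)
  ultimately show ?thesis using LIM_unique by blast
qed

lemma A_lemma:
  fixes K :: "'a set" and e :: "'a \<Rightarrow> nat \<Rightarrow> nat" and c :: "'a \<Rightarrow> real"
  assumes "finite K" "K \<noteq> {}" "inj_on e K" "\<forall>k\<in>K. \<forall>i\<ge>n. e k i = 0" "\<forall>k\<in>K. c k \<noteq> 0"
    "\<forall>x. (\<Sum>k\<in>K. c k * (\<Prod>i<n. x i ^ e k i)) = 0"
  shows False
  using assms
proof (induction n arbitrary: K e c)
  case 0
  obtain k where k: "k \<in> K" using 0 by blast
  have "K = {k}"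
  proof safe
    fix k' assume "k' \<in> K"
    with k 0 have "e k' = e k" by auto
    with k \<open>k' \<in> K\<close> 0(3) show "k' = k" by (auto dest: inj_onD)
  qed (use k in auto)
  then show False using 0 k by auto
next
  case (Suc n)
  define a where "a = Min ((\<lambda>k. e k n) ` K)"
  define e' where "e' k i = (if i = n then e k i - a else e k i)" for k i
  have a_le: "\<forall>k\<in>K. a \<le> e k n" unfolding a_def using Suc.prems(1) by auto
  have "a \<in> (\<lambda>k. e k n) ` K"
    unfolding a_def using Suc.prems(1,2) by (intro Min_in) auto
  then obtain k0 where k0: "k0 \<in> K" "e k0 n = a" by auto
  have split: "(\<Prod>i<Suc n. x i ^ e' k i) = (\<Prod>i<n. x i ^ e' k i) * x n ^ e' k n" for x k
    by simp
  have fact: "(\<Prod>i<Suc n. x i ^ e k i) = x n ^ a * (\<Prod>i<Suc n. x i ^ e' k i)" if "k \<in> K" for x k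
  proof -
    have "(\<Prod>i<n. x i ^ e k i) = (\<Prod>i<n. x i ^ e' k i)" by (rule prod.cong) (auto simp: e'_def)
    moreover have "x n ^ e k n = x n ^ a * x n ^ e' k n"
      using a_le that by (simp add: e'_def flip: power_add)
    ultimately show ?thesis by (simp add: split mult_ac)
  qed
  define g where "g x = (\<Sum>k\<in>K. c k * (\<Prod>i<Suc n. x i ^ e' k i))" for x
  have g1: "g x = 0" if "x n \<noteq> 0" for x
  proof -
    have "0 = (\<Sum>k\<in>K. c k * (\<Prod>i<Suc n. x i ^ e k i))" using Suc.prems(6) by simp
    also have "\<dots> = x n ^ a * g x" unfolding g_def sum_distrib_left
      by (rule sum.cong) (auto simp: fact mult_ac simp del: prod.lessThan_Suc)
    finally show ?thesis using that by simp
  qed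
  have g0: "g x = 0" for x
  proof (cases "x n = 0")
    case False then show ?thesis by (rule g1)
  next
    case True
    define h where "h t = g (\<lambda>i. x i + (if i = n then 1 else 0) * t)" for t
    have "isCont h 0" unfolding h_def g_def by (intro continuous_intros)
    moreover have "h t = 0" if "t \<noteq> 0" for t unfolding h_def using that True
      by (intro g1) simp
    ultimately have "h 0 = 0" by (rule cont0)
    then show ?thesis by (simp add: h_def)
  qed
  define K0 where "K0 = {k\<in>K. e' k n = 0}"
  have inj': "inj_on e' K"
  proof (rule inj_onI)
    fix k k' assume kk: "k \<in> K" "k' \<in> K" "e' k = e' k'"
    have "e k = e k'"
    proof
      fix i show "e k i = e k' i"
      proof (cases "i = n")
        case True
        have "a \<le> e k n" "a \<le> e k' n" using a_le kk(1,2) by auto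
        then show ?thesis using fun_cong[OF kk(3), of i] True by (simp add: e'_def)
      qed (use fun_cong[OF kk(3), of i] in \<open>simp add: e'_def\<close>)
    qed
    then show "k = k'" using Suc.prems(3) kk by (auto dest: inj_onD)
  qed
  show False
  proof (rule Suc.IH[of K0 e' c])
    show "finite K0" using Suc.prems(1) by (simp add: K0_def)
    show "K0 \<noteq> {}" using k0 by (auto simp: K0_def e'_def)
    show "inj_on e' K0" using inj' by (rule inj_on_subset) (auto simp: K0_def)
    show "\<forall>k\<in>K0. \<forall>i\<ge>n. e' k i = 0"
    proof (intro ballI allI impI)
      fix k i assume "k \<in> K0" "n \<le> i"
      then show "e' k i = 0" using Suc.prems(4)
        by (cases "i = n") (auto simp: K0_def e'_def)
    qed
    show "\<forall>k\<in>K0. c k \<noteq> 0" using Suc.prems(5) by (auto simp: K0_def)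
    show "\<forall>x. (\<Sum>k\<in>K0. c k * (\<Prod>i<n. x i ^ e' k i)) = 0"
    proof
      fix x
      have "0 = g (x(n:=0))" by (rule g0[symmetric])
      also have "\<dots> = (\<Sum>k\<in>K. if e' k n = 0 then c k * (\<Prod>i<n. x i ^ e' k i) else 0)"
        unfolding g_def split
      proof (rule sum.cong)
        fix k assume "k \<in> K"
        have "(\<Prod>i<n. (x(n:=0)) i ^ e' k i) = (\<Prod>i<n. x i ^ e' k i)" by (rule prod.cong) auto
        then show "c k * ((\<Prod>i<n. (x(n := 0)) i ^ e' k i) * (x(n := 0)) n ^ e' k n) =
          (if e' k n = 0 then c k * (\<Prod>i<n. x i ^ e' k i) else 0)" by simp
      qed simp
      also have "\<dots> = (\<Sum>k\<in>K0. c k * (\<Prod>i<n. x i ^ e' k i))"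
        unfolding K0_def using Suc.prems(1) by (simp add: sum.inter_filter)
      finally show "(\<Sum>k\<in>K0. c k * (\<Prod>i<n. x i ^ e' k i)) = 0" by simp
    qed
  qed
qed


lemma L_lemma:
  fixes K :: "'a set" and e :: "'a \<Rightarrow> nat \<Rightarrow> nat" and c :: "'a \<Rightarrow> real"
  assumes "finite K" "K \<noteq> {}" "inj_on e K" "\<forall>k\<in>K. \<forall>i\<ge>n. e k i = 0" "\<forall>k\<in>K. c k \<noteq> 0"
    "\<forall>x. (\<Sum>j<n. x j) = 0 \<longrightarrow> (\<Sum>k\<in>K. c k * (\<Prod>i<n. x i ^ e k i)) = 0"
  shows "n \<le> card K"
  using assms
proof (induction n arbitrary: K e c)
  case 0
  then show ?case by simp
next
  case (Suc n)
  show ?case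
  proof (cases "n = 0")
    case True
    then show ?thesis using Suc.prems(1,2) by (simp add: Suc_le_eq card_gt_0_iff)
  next
    case nz: False
  define a where "a = Min ((\<lambda>k. e k n) ` K)"
  define e' where "e' k i = (if i = n then e k i - a else e k i)" for k i
  have a_le: "\<forall>k\<in>K. a \<le> e k n" unfolding a_def using Suc.prems(1) by auto
  have "a \<in> (\<lambda>k. e k n) ` K"
    unfolding a_def using Suc.prems(1,2) by (intro Min_in) auto
  then obtain k0 where k0: "k0 \<in> K" "e k0 n = a" by auto
  have split: "(\<Prod>i<Suc n. x i ^ e' k i) = (\<Prod>i<n. x i ^ e' k i) * x n ^ e' k n" for x k
    by simp
  have fact: "(\<Prod>i<Suc n. x i ^ e k i) = x n ^ a * (\<Prod>i<Suc n. x i ^ e' k i)" if "k \<in> K" for x k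
  proof -
    have "(\<Prod>i<n. x i ^ e k i) = (\<Prod>i<n. x i ^ e' k i)" by (rule prod.cong) (auto simp: e'_def)
    moreover have "x n ^ e k n = x n ^ a * x n ^ e' k n"
      using a_le that by (simp add: e'_def flip: power_add)
    ultimately show ?thesis by (simp add: split mult_ac)
  qed
  define g where "g x = (\<Sum>k\<in>K. c k * (\<Prod>i<Suc n. x i ^ e' k i))" for x
  have g1: "g x = 0" if "x n \<noteq> 0" "(\<Sum>j<Suc n. x j) = 0" for x
  proof -
    have "0 = (\<Sum>k\<in>K. c k * (\<Prod>i<Suc n. x i ^ e k i))" using Suc.prems(6) that(2) by simp
    also have "\<dots> = x n ^ a * g x" unfolding g_def sum_distrib_left
      by (rule sum.cong) (auto simp: fact mult_ac simp del: prod.lessThan_Suc)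
    finally show ?thesis using that by simp
  qed
  have g0: "g x = 0" if xs: "(\<Sum>j<Suc n. x j) = 0" for x
  proof (cases "x n = 0")
    case False then show ?thesis using xs by (rule g1)
  next
    case True
    define d :: "nat \<Rightarrow> real" where "d i = (if i = n then 1 else 0) - (if i = 0 then 1 else 0)" for i
    define h where "h t = g (\<lambda>i. x i + d i * t)" for t
    have "isCont h 0" unfolding h_def g_def by (intro continuous_intros)
    moreover have "h t = 0" if "t \<noteq> 0" for t unfolding h_def
    proof (intro g1)
      show "x n + d n * t \<noteq> 0" using that True nz by (simp add: d_def)
      have "(\<lambda>j. d j * t) = (\<lambda>j. (if j = n then t else 0) - (if j = 0 then t else 0))"
        by (auto simp: d_def fun_eq_iff)
      then have "(\<Sum>j<Suc n. d j * t) = (\<Sum>j<Suc n. (if j = n then t else 0)) - (\<Sum>j<Suc n. (if j = 0 then t else 0))"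
        by (simp only: sum_subtractf)
      also have "\<dots> = 0" by simp
      finally show "(\<Sum>j<Suc n. x j + d j * t) = 0" using xs by (simp add: sum.distrib)
    qed
    ultimately have "h 0 = 0" by (rule cont0)
    then show ?thesis by (simp add: h_def)
  qed
  define K0 where "K0 = {k\<in>K. e' k n = 0}"
  have inj': "inj_on e' K"
  proof (rule inj_onI)
    fix k k' assume kk: "k \<in> K" "k' \<in> K" "e' k = e' k'"
    have "e k = e k'"
    proof
      fix i show "e k i = e k' i"
      proof (cases "i = n")
        case True
        have "a \<le> e k n" "a \<le> e k' n" using a_le kk(1,2) by auto
        then show ?thesis using fun_cong[OF kk(3), of i] True by (simp add: e'_def)
      qed (use fun_cong[OF kk(3), of i] in \<open>simp add: e'_def\<close>)
    qed
    then show "k = k'" using Suc.prems(3) kk by (auto dest: inj_onD)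
  qed
  have restr: "g (x(n:=v)) = (\<Sum>k\<in>K. c k * (\<Prod>i<n. x i ^ e' k i) * v ^ e' k n)" for x v
    unfolding g_def split
  proof (rule sum.cong)
    fix k assume "k \<in> K"
    have "(\<Prod>i<n. (x(n:=v)) i ^ e' k i) = (\<Prod>i<n. x i ^ e' k i)" by (rule prod.cong) auto
    then show "c k * ((\<Prod>i<n. (x(n := v)) i ^ e' k i) * (x(n := v)) n ^ e' k n) =
          c k * (\<Prod>i<n. x i ^ e' k i) * v ^ e' k n" by simp
  qed simp
  have sumupd: "(\<Sum>j<Suc n. (x(n:=v)) j) = (\<Sum>j<n. x j) + v" for x v
  proof -
    have "(\<Sum>j<n. (x(n:=v)) j) = (\<Sum>j<n. x j)" by (rule sum.cong) auto
    then show ?thesis by simp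
  qed
  have IH: "n \<le> card K0"
  proof (rule Suc.IH[of K0 e' c])
    show "finite K0" using Suc.prems(1) by (simp add: K0_def)
    show "K0 \<noteq> {}" using k0 by (auto simp: K0_def e'_def)
    show "inj_on e' K0" using inj' by (rule inj_on_subset) (auto simp: K0_def)
    show "\<forall>k\<in>K0. \<forall>i\<ge>n. e' k i = 0"
    proof (intro ballI allI impI)
      fix k i assume "k \<in> K0" "n \<le> i"
      then show "e' k i = 0" using Suc.prems(4)
        by (cases "i = n") (auto simp: K0_def e'_def)
    qed
    show "\<forall>k\<in>K0. c k \<noteq> 0" using Suc.prems(5) by (auto simp: K0_def)
    show "\<forall>x. (\<Sum>j<n. x j) = 0 \<longrightarrow> (\<Sum>k\<in>K0. c k * (\<Prod>i<n. x i ^ e' k i)) = 0"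
    proof (intro allI impI)
      fix x :: "nat \<Rightarrow> real" assume xs: "(\<Sum>j<n. x j) = 0"
      have "0 = g (x(n:=0))" by (rule g0[symmetric]) (simp add: sumupd xs)
      also have "\<dots> = (\<Sum>k\<in>K. if e' k n = 0 then c k * (\<Prod>i<n. x i ^ e' k i) else 0)"
        unfolding restr by (rule sum.cong) auto
      also have "\<dots> = (\<Sum>k\<in>K0. c k * (\<Prod>i<n. x i ^ e' k i))"
        unfolding K0_def using Suc.prems(1) by (simp add: sum.inter_filter)
      finally show "(\<Sum>k\<in>K0. c k * (\<Prod>i<n. x i ^ e' k i)) = 0" by simp
    qed
  qed
  show ?thesis
  proof (cases "K0 = K")
    case False
    then have "card K0 < card K" using Suc.prems(1) by (intro psubset_card_mono) (auto simp: K0_def)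
    then show ?thesis using IH by simp
  next
    case True
    show ?thesis
    proof (rule ccontr, rule A_lemma[of K e' n c])
      show "finite K" "K \<noteq> {}" "\<forall>k\<in>K. c k \<noteq> 0" using Suc.prems by auto
      show "inj_on e' K" by (rule inj')
      show "\<forall>k\<in>K. \<forall>i\<ge>n. e' k i = 0"
      proof (intro ballI allI impI)
        fix k i assume "k \<in> K" "n \<le> i"
        then show "e' k i = 0" using Suc.prems(4) True
          by (cases "i = n") (auto simp: K0_def e'_def)
      qed
      show "\<forall>x. (\<Sum>k\<in>K. c k * (\<Prod>i<n. x i ^ e' k i)) = 0"
      proof
        fix x :: "nat \<Rightarrow> real"
        have "0 = g (x(n:= - (\<Sum>j<n. x j)))" by (rule g0[symmetric]) (simp add: sumupd)
        also have "\<dots> = (\<Sum>k\<in>K. c k * (\<Prod>i<n. x i ^ e' k i))"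
          unfolding restr
        proof (intro sum.cong refl)
          fix k assume "k \<in> K"
          then have "e' k n = 0" using True by (auto simp: K0_def)
          then show "c k * (\<Prod>i<n. x i ^ e' k i) * (- (\<Sum>j<n. x j)) ^ e' k n = c k * (\<Prod>i<n. x i ^ e' k i)"
            by simp
        qed
        finally show "(\<Sum>k\<in>K. c k * (\<Prod>i<n. x i ^ e' k i)) = 0" by simp
      qed
    qed
  qed
  qed
qed


theorem corollary1:
  fixes p :: mpoly_r and n d :: nat
  assumes "d > 0"
    and "vars_in p n"
    and "p \<noteq> 0"
    and "total_deg p = d"
    and "\<forall>x :: nat \<Rightarrow> real. (\<Sum>j<n. x j) = 1 \<longrightarrow> eval_mp p x = 1"
  shows "card {m \<in> Poly_Mapping.keys p. mon_deg m = d} \<ge> n"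
proof (cases "n = 0")
  case True then show ?thesis by simp
next
  case nz: False
  define K where "K = Poly_Mapping.keys p"
  define Kd where "Kd = {m \<in> K. mon_deg m = d}"
  have finK: "finite K" by (simp add: K_def)
  have keysm: "Poly_Mapping.keys m \<subseteq> {..<n}" if "m \<in> K" for m
    using assms(2) that by (auto simp: vars_in_def K_def)
  have prod_eq: "(\<Prod>i\<in>Poly_Mapping.keys m. x i ^ Poly_Mapping.lookup m i) = (\<Prod>i<n. x i ^ Poly_Mapping.lookup m i)"
    if "m \<in> K" for m and x :: "nat \<Rightarrow> real"
    by (rule prod.mono_neutral_left) (use keysm[OF that] in \<open>auto simp: in_keys_iff\<close>)
  have deg_eq: "mon_deg m = (\<Sum>i<n. Poly_Mapping.lookup m i)" if "m \<in> K" for m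
    unfolding mon_deg_def
    by (rule sum.mono_neutral_left) (use keysm[OF that] in \<open>auto simp: in_keys_iff\<close>)
  have eval_eq: "eval_mp p x = (\<Sum>m\<in>K. Poly_Mapping.lookup p m * (\<Prod>i<n. x i ^ Poly_Mapping.lookup m i))" for x
    unfolding eval_mp_def K_def[symmetric] by (rule sum.cong) (auto simp: prod_eq)
  have Kne: "K \<noteq> {}" using assms(3) by (simp add: K_def)
  have tdeg: "Max (mon_deg ` K) = d" using assms(3,4) by (simp add: total_deg_def K_def)
  have deg_le: "mon_deg m \<le> d" if "m \<in> K" for m
    using tdeg finK that by (metis Max_ge finite_imageI imageI)
  have "d \<in> mon_deg ` K" unfolding tdeg[symmetric] using finK Kne by (intro Max_in) auto
  then have Kdne: "Kd \<noteq> {}" by (auto simp: Kd_def)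
  have van: "(\<Sum>m\<in>Kd. Poly_Mapping.lookup p m * (\<Prod>i<n. z i ^ Poly_Mapping.lookup m i)) = 0"
    if zs: "(\<Sum>j<n. z j) = 0" for z :: "nat \<Rightarrow> real"
  proof -
    define w where "w t = (\<lambda>i. z i + (if i = 0 then 1 else 0) * t)" for t :: real
    define H where "H t = (\<Sum>m\<in>K. Poly_Mapping.lookup p m * (\<Prod>i<n. w t i ^ Poly_Mapping.lookup m i) * t ^ (d - mon_deg m))" for t
    have "isCont H 0" unfolding H_def w_def by (intro continuous_intros)
    then have c1: "isCont (\<lambda>t. H t - t ^ d) 0" by (intro continuous_intros)
    have "H t - t ^ d = 0" if t0: "t \<noteq> 0" for t
    proof -
      have "(\<Sum>j<n. (if j = 0 then 1 else 0) * t) = (\<Sum>j<n. if j = 0 then t else 0)"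
        by (rule sum.cong) auto
      also have "\<dots> = t" using nz by simp
      finally have "(\<Sum>j<n. (if j = 0 then 1 else 0) * t) = t" .
      then have sw: "(\<Sum>j<n. w t j) = t"
        using zs by (simp add: w_def sum.distrib)
      define x where "x i = w t i / t" for i
      have "(\<Sum>j<n. x j) = 1" using sw t0 by (simp add: x_def flip: sum_divide_distrib)
      then have "1 = eval_mp p x" using assms(5) by simp
      also have "\<dots> = (\<Sum>m\<in>K. Poly_Mapping.lookup p m * (\<Prod>i<n. w t i ^ Poly_Mapping.lookup m i) / t ^ mon_deg m)"
        unfolding eval_eq
      proof (rule sum.cong)
        fix m assume "m \<in> K"
        have "(\<Prod>i<n. x i ^ Poly_Mapping.lookup m i) = (\<Prod>i<n. w t i ^ Poly_Mapping.lookup m i) / (\<Prod>i<n. t ^ Poly_Mapping.lookup m i)"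
          by (simp add: x_def power_divide prod_dividef)
        also have "(\<Prod>i<n. t ^ Poly_Mapping.lookup m i) = t ^ mon_deg m"
          by (simp add: deg_eq[OF \<open>m \<in> K\<close>] power_sum)
        finally show "Poly_Mapping.lookup p m * (\<Prod>i<n. x i ^ Poly_Mapping.lookup m i) =
          Poly_Mapping.lookup p m * (\<Prod>i<n. w t i ^ Poly_Mapping.lookup m i) / t ^ mon_deg m" by simp
      qed simp
      finally have "t ^ d = t ^ d * (\<Sum>m\<in>K. Poly_Mapping.lookup p m * (\<Prod>i<n. w t i ^ Poly_Mapping.lookup m i) / t ^ mon_deg m)"
        by simp
      also have "\<dots> = H t" unfolding H_def sum_distrib_left
      proof (rule sum.cong)
        fix m assume "m \<in> K"
        have "t ^ d = t ^ (d - mon_deg m) * t ^ mon_deg m"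
          using deg_le[OF \<open>m \<in> K\<close>] by (simp flip: power_add)
        then show "t ^ d * (Poly_Mapping.lookup p m * (\<Prod>i<n. w t i ^ Poly_Mapping.lookup m i) / t ^ mon_deg m) =
          Poly_Mapping.lookup p m * (\<Prod>i<n. w t i ^ Poly_Mapping.lookup m i) * t ^ (d - mon_deg m)"
          using t0 by (simp add: field_simps)
      qed simp
      finally show ?thesis by simp
    qed
    from cont0[OF c1 this] have "H 0 = 0" using assms(1) by simp
    moreover have "H 0 = (\<Sum>m\<in>K. if mon_deg m = d then Poly_Mapping.lookup p m * (\<Prod>i<n. z i ^ Poly_Mapping.lookup m i) else 0)"
      unfolding H_def
    proof (rule sum.cong)
      fix m assume "m \<in> K"
      have "w 0 = z" by (simp add: w_def)
      then show "Poly_Mapping.lookup p m * (\<Prod>i<n. w 0 i ^ Poly_Mapping.lookup m i) * 0 ^ (d - mon_deg m) =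
        (if mon_deg m = d then Poly_Mapping.lookup p m * (\<Prod>i<n. z i ^ Poly_Mapping.lookup m i) else 0)"
        using deg_le[OF \<open>m \<in> K\<close>] by auto
    qed simp
    ultimately show ?thesis unfolding Kd_def using finK by (simp add: sum.inter_filter)
  qed
  have "n \<le> card Kd"
  proof (rule L_lemma[of Kd Poly_Mapping.lookup n "Poly_Mapping.lookup p"])
    show "finite Kd" using finK by (simp add: Kd_def)
    show "Kd \<noteq> {}" by (rule Kdne)
    show "inj_on Poly_Mapping.lookup Kd" by (rule inj_onI) (simp add: lookup_inject)
    show "\<forall>k\<in>Kd. \<forall>i\<ge>n. Poly_Mapping.lookup k i = 0"
      using keysm by (fastforce simp: Kd_def in_keys_iff)
    show "\<forall>k\<in>Kd. Poly_Mapping.lookup p k \<noteq> 0" by (auto simp: Kd_def K_def in_keys_iff)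
    show "\<forall>x. (\<Sum>j<n. x j) = 0 \<longrightarrow> (\<Sum>k\<in>Kd. Poly_Mapping.lookup p k * (\<Prod>i<n. x i ^ Poly_Mapping.lookup k i)) = 0"
      using van by blast
  qed
  then show ?thesis by (simp add: Kd_def K_def)
qed

end
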